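(* Let $R$ be a tangible supersemifield, $(q,b)$ a quadratic pair on an $R$-module $V$, $x,y\in V$, and put $\alpha_1=q(x)$, $\alpha_2=q(y)$, $\alpha=b(x,y)$, all assumed nonzero. Choose $\zeta,\eta\in\mathcal T$ with $\alpha\cong_\nu\zeta\alpha_1$ and $\alpha_2\cong_\nu\eta\alpha$. Let $\lambda,\mu\in R$, not both zero. (i) If $\alpha^2>_\nu\alpha_1\alpha_2$ and it is not the case that [$R$ is discrete and $\alpha^2\cong_\nu\pi^{-1}\alpha_1\alpha_2$], then $q(\lambda x+\mu y)=\lambda^2\alpha_1$ if $\lambda>_\nu\zeta\mu$; $=e\lambda^2\alpha_1=e\lambda\mu\alpha$ if $\lambda\cong_\nu\zeta\mu$; $=\lambda\mu\alpha$ if $\eta\mu<_\nu\lambda<_\nu\zeta\mu$; $=e\mu^2\alpha_2=e\lambda\mu\alpha$ if $\lambda\cong_\nu\eta\mu$; $=\mu^2\alpha_2$ if $\lambda<_\nu\eta\mu$. (ii) If $R$ is discrete and $\alpha^2\cong_\nu\pi^{-1}\alpha_1\alpha_2$, then exactly one of $\lambda>_\nu\zeta\mu$, $\lambda\cong_\nu\zeta\mu$, $\lambda\cong_\nu\eta\mu$, $\lambda<_\nu\eta\mu$ holds, and correspondingly $q(\lambda x+\mu y)$ equals $\lambda^2\alpha_1$, $e\lambda^2\alpha_1=e\lambda\mu\alpha$, $e\mu^2\alpha_2=e\lambda\mu\alpha$, $\mu^2\alpha_2$. (iii) If $\alpha^2\le_\nu\alpha_1\alpha_2$, then $q(\lambda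 x+\mu y)=\lambda^2\alpha_1$ if $\lambda^2\alpha_1>_\nu\mu^2\alpha_2$; $=e\lambda^2\alpha_1=e\mu^2\alpha_2$ if $\lambda^2\alpha_1\cong_\nu\mu^2\alpha_2$ (which can only happen if $\alpha_1\alpha_2$ is a $\nu$-square); $=\mu^2\alpha_2$ if $\lambda^2\alpha_1<_\nu\mu^2\alpha_2$.
   Context: All semirings are commutative with $1$. A semiring $R$ is supertropical if $e:=1+1$ satisfies $e+e=e$ and, for all $x,y\in R$: if $ex\neq ey$ then $x+y\in\{x,y\}$, and if $ex=ey$ then $x+y=ey$. $eR$ is totally ordered by $u\le v\iff u+v=v$; write $x\le_\nu y$, $x\cong_\nu y$, $x<_\nu y$ for $ex\le ey$, $ex=ey$, $ex<ey$. $\mathcal T=R\setminus eR$, $\mathcal G=eR\setminus\{0\}$. A tangible supersemifield is a supertropical semiring in which $\mathcal T$ and $\mathcal G$ are groups under multiplication and $e\mathcal T=\mathcal G$. It is discrete if $\mathcal G$ has a smallest element $c_0>e$, and then $\pi\in\mathcal T$ denotes an element with $e\pi^{-1}=c_0$. An element $a\in R$ is a $\nu$-square if $a\cong_\nu d^2$ for some $d\in R$. A quadratic form on an $R$-module $V$ is a map $q:V\to R$ with $q(ax)=a^2q(x)$ such that some symmetric bilinear $b$ satisfies $q(x+y)=q(x)+q(y)+b(x,y)$; $(q,b)$ is a quadratic pair. *)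

theory Defs
  imports Main
begin

text \<open>The semiring R is the whole carrier of a type of class comm_semiring_1
  (commutative, with 1 and absorbing 0).\<close>

definition ee :: "'a::comm_semiring_1" where
  "ee = 1 + 1"

definition supertropical :: "'a::comm_semiring_1 itself \<Rightarrow> bool" where
  "supertropical _ \<longleftrightarrow>
     (ee::'a) + ee = ee \<and>
     (\<forall>x y::'a. (ee * x \<noteq> ee * y \<longrightarrow> x + y \<in> {x, y}) \<and>
                (ee * x = ee * y \<longrightarrow> x + y = ee * y))"

text \<open>The order on eR: u \<le> v iff u + v = v, and the nu-relations.\<close>

definition nu_le :: "'a::comm_semiring_1 \<Rightarrow> 'a \<Rightarrow> bool" where
  "nu_le x y \<longleftrightarrow> ee * x + ee * y = ee * y"

definition nu_eq :: "'a::comm_semiring_1 \<Rightarrow> 'a \<Rightarrow> bool" where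
  "nu_eq x y \<longleftrightarrow> ee * x = ee * y"

definition nu_less :: "'a::comm_semiring_1 \<Rightarrow> 'a \<Rightarrow> bool" where
  "nu_less x y \<longleftrightarrow> nu_le x y \<and> ee * x \<noteq> ee * y"

definition tangibles :: "'a::comm_semiring_1 set" where
  "tangibles = UNIV - range (\<lambda>x. ee * x)"

definition ghosts :: "'a::comm_semiring_1 set" where
  "ghosts = range (\<lambda>x. ee * x) - {0}"

definition mult_group :: "'a::comm_semiring_1 set \<Rightarrow> bool" where
  "mult_group S \<longleftrightarrow>
     (\<forall>x\<in>S. \<forall>y\<in>S. x * y \<in> S) \<and>
     (\<exists>u\<in>S. (\<forall>x\<in>S. u * x = x) \<and> (\<forall>x\<in>S. \<exists>y\<in>S. x * y = u))"

definition tangible_supersemifield :: "'a::comm_semiring_1 itself \<Rightarrow> bool" where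
  "tangible_supersemifield T \<longleftrightarrow>
     supertropical T \<and> mult_group (tangibles::'a set) \<and> mult_group (ghosts::'a set) \<and>
     (\<lambda>x. ee * x) ` (tangibles::'a set) = ghosts"

text \<open>Inverse in the tangible group (whose identity is necessarily 1).\<close>
definition tinv :: "'a::comm_semiring_1 \<Rightarrow> 'a" where
  "tinv x = (SOME y. y \<in> tangibles \<and> x * y = 1)"

definition smallest_above_e :: "'a::comm_semiring_1 \<Rightarrow> bool" where
  "smallest_above_e c0 \<longleftrightarrow> c0 \<in> ghosts \<and> ee + c0 = c0 \<and> c0 \<noteq> ee \<and>
     (\<forall>c\<in>ghosts. (ee + c = c \<and> c \<noteq> ee) \<longrightarrow> c0 + c = c)"

text \<open>pi is a tangible element with e * pi^{-1} = c0; R is discrete iff such pi exists.\<close>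
definition uniformizer :: "'a::comm_semiring_1 \<Rightarrow> bool" where
  "uniformizer p \<longleftrightarrow> p \<in> tangibles \<and> smallest_above_e (ee * tinv p)"

definition discrete :: "'a::comm_semiring_1 itself \<Rightarrow> bool" where
  "discrete _ \<longleftrightarrow> (\<exists>c0::'a. smallest_above_e c0)"

definition nu_square :: "'a::comm_semiring_1 \<Rightarrow> bool" where
  "nu_square a \<longleftrightarrow> (\<exists>d. nu_eq a (d^2))"

definition semimodule :: "('a::comm_semiring_1 \<Rightarrow> 'v::comm_monoid_add \<Rightarrow> 'v) \<Rightarrow> bool" where
  "semimodule sm \<longleftrightarrow>
     (\<forall>a b v. sm (a + b) v = sm a v + sm b v) \<and>
     (\<forall>a v w. sm a (v + w) = sm a v + sm a w) \<and>
     (\<forall>a b v. sm (a * b) v = sm a (sm b v)) \<and>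
     (\<forall>v. sm 1 v = v) \<and> (\<forall>v. sm 0 v = 0) \<and> (\<forall>a. sm a 0 = 0)"

definition symmetric_bilinear ::
  "('a::comm_semiring_1 \<Rightarrow> 'v::comm_monoid_add \<Rightarrow> 'v) \<Rightarrow> ('v \<Rightarrow> 'v \<Rightarrow> 'a) \<Rightarrow> bool" where
  "symmetric_bilinear sm b \<longleftrightarrow>
     (\<forall>x y. b x y = b y x) \<and>
     (\<forall>x x' y. b (x + x') y = b x y + b x' y) \<and>
     (\<forall>a x y. b (sm a x) y = a * b x y)"

definition quadratic_pair ::
  "('a::comm_semiring_1 \<Rightarrow> 'v::comm_monoid_add \<Rightarrow> 'v) \<Rightarrow> ('v \<Rightarrow> 'a) \<Rightarrow> ('v \<Rightarrow> 'v \<Rightarrow> 'a) \<Rightarrow> bool" where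
  "quadratic_pair sm q b \<longleftrightarrow>
     (\<forall>a x. q (sm a x) = a^2 * q x) \<and> symmetric_bilinear sm b \<and>
     (\<forall>x y. q (x + y) = q x + q y + b x y)"

end

theory Submission imports Defs begin

lemma st_facts:
  assumes "supertropical TYPE('a::comm_semiring_1)"
  shows "(ee::'a)+ee = ee"
    and "\<And>x y::'a. ee*x \<noteq> ee*y \<Longrightarrow> x+y \<in> {x,y}"
    and "\<And>x y::'a. ee*x = ee*y \<Longrightarrow> x + y = ee*y"
  using assms unfolding supertropical_def by auto

lemma ee_idem:
  assumes "supertropical TYPE('a::comm_semiring_1)"
  shows "(ee::'a)*ee = ee"
proof -
  have "(ee::'a)*ee = ee + ee" by (simp add: ee_def distrib_right)
  then show ?thesis using st_facts(1)[OF assms] by simp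
qed

lemma ee_ee:
  assumes "supertropical TYPE('a::comm_semiring_1)"
  shows "(ee::'a)*(ee*x) = ee*x"
  using ee_idem[OF assms] by (metis mult.assoc)

lemma nu_add_less:
  assumes S: "supertropical TYPE('a::comm_semiring_1)" and h: "nu_less (x::'a) y"
  shows "x + y = y"
proof -
  from h have ne: "ee*x \<noteq> ee*y" and le: "ee*x + ee*y = ee*y" unfolding nu_less_def nu_le_def by auto
  from st_facts(2)[OF S ne] have "x + y \<in> {x,y}" .
  moreover have "x + y \<noteq> x"
  proof
    assume "x + y = x"
    then have "ee*x = ee*(x+y)" by simp
    also have "\<dots> = ee*y" using le by (simp add: distrib_left)
    finally show False using ne by simp
  qed
  ultimately show ?thesis by auto
qed

lemma nu_add_eq:
  assumes S: "supertropical TYPE('a::comm_semiring_1)" and h: "nu_eq (x::'a) y"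
  shows "x + y = ee*y"
  using st_facts(3)[OF S] h unfolding nu_eq_def by auto

lemma nu_refl:
  assumes S: "supertropical TYPE('a::comm_semiring_1)"
  shows "nu_le (x::'a) x"
  unfolding nu_le_def using st_facts(1)[OF S] by (metis distrib_right)

lemma nu_total:
  assumes S: "supertropical TYPE('a::comm_semiring_1)"
  shows "nu_le (x::'a) y \<or> nu_le y x"
proof (cases "ee*x = ee*y")
  case True then show ?thesis using nu_refl[OF S, of x] unfolding nu_le_def by simp
next
  case False
  then have "ee*(ee*x) \<noteq> ee*(ee*y)" by (simp add: ee_ee[OF S])
  from st_facts(2)[OF S this] have "ee*x + ee*y \<in> {ee*x, ee*y}" .
  then show ?thesis unfolding nu_le_def by (auto simp: add.commute)
qed

lemma nu_antisym:
  "nu_le x y \<Longrightarrow> nu_le y x \<Longrightarrow> nu_eq x y"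
  unfolding nu_le_def nu_eq_def by (metis add.commute)

lemma nu_trans:
  "nu_le x y \<Longrightarrow> nu_le y z \<Longrightarrow> nu_le x z"
  unfolding nu_le_def by (metis add.assoc)

lemma nu_less_trans:
  "nu_less x y \<Longrightarrow> nu_less y z \<Longrightarrow> nu_less x z"
proof -
  assume a: "nu_less x y" "nu_less y z"
  then have "nu_le x z" unfolding nu_less_def using nu_trans by blast
  moreover have "ee*x \<noteq> ee*z"
  proof
    assume e: "ee*x = ee*z"
    from a have "nu_le y x" unfolding nu_less_def nu_le_def using e by simp
    with a show False using nu_antisym unfolding nu_less_def nu_eq_def by blast
  qed
  ultimately show ?thesis unfolding nu_less_def by simp
qed

lemma nu_less_le_trans:
  "nu_less x y \<Longrightarrow> nu_le y z \<Longrightarrow> nu_less x z"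
  unfolding nu_less_def nu_le_def by (metis add.assoc add.commute)

lemma nu_le_less_trans:
  "nu_le x y \<Longrightarrow> nu_less y z \<Longrightarrow> nu_less x z"
  unfolding nu_less_def nu_le_def by (metis add.assoc add.commute)

lemma nu_not_less:
  assumes S: "supertropical TYPE('a::comm_semiring_1)"
  shows "(\<not> nu_less (x::'a) y) = nu_le y x"
proof
  assume "\<not> nu_less x y"
  then have "\<not> nu_le x y \<or> ee*x = ee*y" unfolding nu_less_def by simp
  then show "nu_le y x"
  proof
    assume "\<not> nu_le x y" then show ?thesis using nu_total[OF S] by blast
  next
    assume "ee*x = ee*y" then show ?thesis using nu_refl[OF S, of x] unfolding nu_le_def by simp
  qed
next
  assume "nu_le y x"
  then show "\<not> nu_less x y" using nu_antisym unfolding nu_less_def nu_eq_def by blast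
qed

lemma nu_less_imp_le: "nu_less x y \<Longrightarrow> nu_le x y" unfolding nu_less_def by simp

lemma nu_eq_imp_le:
  assumes S: "supertropical TYPE('a::comm_semiring_1)"
  shows "nu_eq (x::'a) y \<Longrightarrow> nu_le x y"
  using nu_refl[OF S, of y] unfolding nu_eq_def nu_le_def by simp

lemma nu_le_mult: "nu_le x y \<Longrightarrow> nu_le (z*x) (z*y)"
  unfolding nu_le_def by (metis distrib_left mult.left_commute)

lemma nu_eq_mult: "nu_eq x y \<Longrightarrow> nu_eq (z*x) (z*y)"
  unfolding nu_eq_def by (metis mult.left_commute)

lemma nu_eq_sym: "nu_eq x y \<Longrightarrow> nu_eq y x" unfolding nu_eq_def by simp
lemma nu_eq_trans: "nu_eq x y \<Longrightarrow> nu_eq y z \<Longrightarrow> nu_eq x z" unfolding nu_eq_def by simp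

lemma nu_le_cong: "nu_eq x x' \<Longrightarrow> nu_eq y y' \<Longrightarrow> nu_le x y = nu_le x' y'"
  unfolding nu_eq_def nu_le_def by simp
lemma nu_less_cong: "nu_eq x x' \<Longrightarrow> nu_eq y y' \<Longrightarrow> nu_less x y = nu_less x' y'"
  unfolding nu_eq_def nu_less_def nu_le_def by simp

lemma nu_less_not_eq: "nu_less x y \<Longrightarrow> \<not> nu_eq x y"
  unfolding nu_eq_def nu_less_def by simp

lemma nu_less_asym: "nu_less x y \<Longrightarrow> \<not> nu_less y x"
  using nu_antisym unfolding nu_less_def nu_eq_def by blast

context
  fixes TT :: "'a::comm_semiring_1 itself"
  assumes R: "tangible_supersemifield TYPE('a)"
begin

lemma S: "supertropical TYPE('a)" using R unfolding tangible_supersemifield_def by simp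

lemma ghosts_group: "mult_group (ghosts::'a set)"
  using R unfolding tangible_supersemifield_def by simp

lemma tang_img: "(\<lambda>x. ee * x) ` (tangibles::'a set) = ghosts"
  using R unfolding tangible_supersemifield_def by simp

lemma ee_nz: "(ee::'a) \<noteq> 0"
proof
  assume "(ee::'a) = 0"
  obtain u where "u \<in> (ghosts::'a set)" using ghosts_group unfolding mult_group_def by blast
  then show False using \<open>ee = 0\<close> unfolding ghosts_def by auto
qed

lemma tang_nz: "t \<in> (tangibles::'a set) \<Longrightarrow> t \<noteq> 0"
  unfolding tangibles_def by (metis DiffE mult_zero_right rangeI)

lemma e_nz: "(x::'a) \<noteq> 0 \<Longrightarrow> ee * x \<noteq> 0"
proof (cases "x \<in> tangibles")
  case True
  then have "ee*x \<in> ghosts" using tang_img by blast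
  then show ?thesis unfolding ghosts_def by auto
next
  case False
  then obtain z where "x = ee*z" unfolding tangibles_def by auto
  then have "ee*x = x" using ee_ee[OF S] by simp
  then show "x \<noteq> 0 \<Longrightarrow> ?thesis" by simp
qed

lemma e_ghost: "(x::'a) \<noteq> 0 \<Longrightarrow> ee * x \<in> ghosts"
  using e_nz unfolding ghosts_def by auto

lemma ghost_unit: "\<forall>g\<in>(ghosts::'a set). \<exists>h\<in>ghosts. g*h = ee"
proof -
  obtain u where u: "u \<in> (ghosts::'a set)" "\<forall>x\<in>ghosts. u*x = x" "\<forall>x\<in>ghosts. \<exists>y\<in>ghosts. x*y = u"
    using ghosts_group unfolding mult_group_def by blast
  have "ee \<in> (ghosts::'a set)" using ee_nz unfolding ghosts_def by (metis DiffI insertE mult.comm_neutral rangeI singletonD empty_iff)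
  then have "u*ee = ee" using u by simp
  moreover obtain z where "u = ee*z" using u(1) unfolding ghosts_def by auto
  ultimately have "u = ee" using ee_ee[OF S] by (metis mult.commute)
  then show ?thesis using u by simp
qed

lemma nz_inv: "(x::'a) \<noteq> 0 \<Longrightarrow> \<exists>s. ee*(s*x) = ee"
proof -
  assume "x \<noteq> 0"
  then have "ee*x \<in> ghosts" by (rule e_ghost)
  then obtain h where h: "h \<in> ghosts" "ee*x*h = ee" using ghost_unit by blast
  then obtain s where "h = ee*s" unfolding ghosts_def by auto
  then have "ee*(s*x) = ee" using h ee_idem[OF S] by (metis mult.assoc mult.commute)
  then show ?thesis by blast
qed

lemma mult_nz: "(x::'a) \<noteq> 0 \<Longrightarrow> y \<noteq> 0 \<Longrightarrow> x*y \<noteq> 0"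
proof -
  assume "x \<noteq> 0" "y \<noteq> 0"
  then have "ee*x \<in> ghosts" "ee*y \<in> ghosts" using e_ghost by auto
  then have "(ee*x)*(ee*y) \<in> ghosts" using ghosts_group unfolding mult_group_def by blast
  then have "(ee*x)*(ee*y) \<noteq> 0" unfolding ghosts_def by auto
  moreover have "(ee*x)*(ee*y) = (ee*ee)*(x*y)" by (simp add: mult_ac)
  ultimately show ?thesis by auto
qed

lemma nz_pow2: "(x::'a) \<noteq> 0 \<Longrightarrow> x^2 \<noteq> 0"
  using mult_nz by (simp add: power2_eq_square)

lemma cancel_aux:
  assumes "(z::'a) \<noteq> 0"
  obtains s where "\<And>t. s*(ee*(z*t)) = ee*t"
proof -
  obtain s where s: "ee*(s*z) = ee" using nz_inv[OF assms] by blast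
  have "s*(ee*(z*t)) = (ee*(s*z))*t" for t by (simp add: mult_ac)
  with s have "\<And>t. s*(ee*(z*t)) = ee*t" by simp
  then show ?thesis by (rule that)
qed

lemma nu_le_cancel: "(z::'a) \<noteq> 0 \<Longrightarrow> nu_le (z*x) (z*y) \<Longrightarrow> nu_le x y"
proof -
  assume z: "z \<noteq> 0" and h: "nu_le (z*x) (z*y)"
  obtain s where s: "\<And>t. s*(ee*(z*t)) = ee*t" using cancel_aux[OF z] by blast
  from h have "s*(ee*(z*x) + ee*(z*y)) = s*(ee*(z*y))" unfolding nu_le_def by simp
  then show ?thesis unfolding nu_le_def by (simp add: distrib_left s)
qed

lemma nu_eq_cancel: "(z::'a) \<noteq> 0 \<Longrightarrow> nu_eq (z*x) (z*y) \<Longrightarrow> nu_eq x y"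
proof -
  assume z: "z \<noteq> 0" and h: "nu_eq (z*x) (z*y)"
  obtain s where s: "\<And>t. s*(ee*(z*t)) = ee*t" using cancel_aux[OF z] by blast
  from h have "s*(ee*(z*x)) = s*(ee*(z*y))" unfolding nu_eq_def by simp
  then show ?thesis unfolding nu_eq_def by (simp add: s)
qed

lemma nu_less_mult: "(z::'a) \<noteq> 0 \<Longrightarrow> nu_less x y \<Longrightarrow> nu_less (z*x) (z*y)"
  using nu_le_mult nu_eq_cancel unfolding nu_less_def nu_eq_def by blast

lemma nu_less_cancel: "(z::'a) \<noteq> 0 \<Longrightarrow> nu_less (z*x) (z*y) \<Longrightarrow> nu_less x y"
  using nu_le_cancel nu_eq_mult unfolding nu_less_def nu_eq_def by blast

lemma nu_less_mult_iff: "(z::'a) \<noteq> 0 \<Longrightarrow> nu_less (z*x) (z*y) = nu_less x y"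
  using nu_less_mult nu_less_cancel by blast
lemma nu_eq_mult_iff: "(z::'a) \<noteq> 0 \<Longrightarrow> nu_eq (z*x) (z*y) = nu_eq x y"
  using nu_eq_mult nu_eq_cancel by blast

lemma nu_le_zero: "nu_le (x::'a) 0 \<Longrightarrow> x = 0"
  unfolding nu_le_def using e_nz by force

lemma nu_less_zero: "(x::'a) \<noteq> 0 \<Longrightarrow> nu_less 0 x"
  unfolding nu_less_def nu_le_def using e_nz by simp

lemma nu_eq_zero: "nu_eq (x::'a) 0 \<Longrightarrow> x = 0"
  unfolding nu_eq_def using e_nz by force

end


lemma nu_add_bound:
  assumes S: "supertropical TYPE('a::comm_semiring_1)"
  shows "nu_less (x::'a) z \<Longrightarrow> nu_less y z \<Longrightarrow> nu_less (x+y) z"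
proof -
  assume a: "nu_less x z" "nu_less y z"
  have "nu_le x y \<or> nu_le y x" by (rule nu_total[OF S])
  then have "ee*(x+y) = ee*y \<or> ee*(x+y) = ee*x"
    unfolding nu_le_def by (auto simp: distrib_left add.commute)
  then show ?thesis using a unfolding nu_less_def nu_le_def by auto
qed

lemma sum_max:
  assumes S: "supertropical TYPE('a::comm_semiring_1)"
  shows "nu_less (x::'a) z \<Longrightarrow> nu_less y z \<Longrightarrow> x + y + z = z"
  using nu_add_bound[OF S] nu_add_less[OF S] by blast

lemma sum_tie:
  assumes S: "supertropical TYPE('a::comm_semiring_1)"
  shows "nu_eq (x::'a) z \<Longrightarrow> nu_le y z \<Longrightarrow> x + y + z = ee*z"
proof -
  assume a: "nu_eq x z" "nu_le y z"
  have xz: "x + z = ee*z" using nu_add_eq[OF S a(1)] .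
  have "x + y + z = y + (x + z)" by (simp add: ac_simps)
  also have "\<dots> = y + ee*z" using xz by simp
  also have "\<dots> = ee*z"
  proof (cases "nu_less y z")
    case True
    then have "nu_less y (ee*z)" unfolding nu_less_def nu_le_def by (simp add: ee_ee[OF S])
    then show ?thesis by (rule nu_add_less[OF S])
  next
    case False
    then have "nu_eq y z" using a(2) nu_antisym nu_not_less[OF S] by blast
    then have "nu_eq y (ee*z)" unfolding nu_eq_def by (simp add: ee_ee[OF S])
    then show ?thesis using nu_add_eq[OF S] ee_ee[OF S] by simp
  qed
  finally show ?thesis .
qed

lemma cmp3:
  assumes "nu_eq X (k*u)" "nu_eq Y (k*v)"
  shows "nu_less X Y = nu_less (k*u) (k*v)" "nu_eq X Y = nu_eq (k*u) (k*v)"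
  using assms unfolding nu_eq_def nu_less_def nu_le_def by auto

theorem proposition3p4:
  fixes sm :: "'a::comm_semiring_1 \<Rightarrow> 'v::comm_monoid_add \<Rightarrow> 'v"
    and q :: "'v \<Rightarrow> 'a" and b :: "'v \<Rightarrow> 'v \<Rightarrow> 'a"
    and x y :: 'v and \<zeta> \<eta> l m :: 'a
  assumes R: "tangible_supersemifield TYPE('a)"
    and V: "semimodule sm"
    and qb: "quadratic_pair sm q b"
    and nz: "q x \<noteq> 0" "q y \<noteq> 0" "b x y \<noteq> 0"
    and zeta: "\<zeta> \<in> tangibles" "nu_eq (b x y) (\<zeta> * q x)"
    and eta: "\<eta> \<in> tangibles" "nu_eq (q y) (\<eta> * b x y)"
    and lm: "l \<noteq> 0 \<or> m \<noteq> 0"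
  shows
   "(let \<alpha>1 = q x; \<alpha>2 = q y; \<alpha> = b x y; Q = q (sm l x + sm m y) in
     (nu_less (\<alpha>1 * \<alpha>2) (\<alpha>^2) \<and>
      \<not> (discrete TYPE('a) \<and> (\<exists>\<pi>. uniformizer \<pi> \<and> nu_eq (\<alpha>^2) (tinv \<pi> * \<alpha>1 * \<alpha>2))) \<longrightarrow>
        (nu_less (\<zeta> * m) l \<longrightarrow> Q = l^2 * \<alpha>1) \<and>
        (nu_eq l (\<zeta> * m) \<longrightarrow> Q = ee * l^2 * \<alpha>1 \<and> Q = ee * l * m * \<alpha>) \<and>
        (nu_less (\<eta> * m) l \<and> nu_less l (\<zeta> * m) \<longrightarrow> Q = l * m * \<alpha>) \<and>
        (nu_eq l (\<eta> * m) \<longrightarrow> Q = ee * m^2 * \<alpha>2 \<and> Q = ee * l * m * \<alpha>) \<and>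
        (nu_less l (\<eta> * m) \<longrightarrow> Q = m^2 * \<alpha>2))
   \<and>
     (discrete TYPE('a) \<and> (\<exists>\<pi>. uniformizer \<pi> \<and> nu_eq (\<alpha>^2) (tinv \<pi> * \<alpha>1 * \<alpha>2)) \<longrightarrow>
        (let P1 = nu_less (\<zeta> * m) l; P2 = nu_eq l (\<zeta> * m);
             P3 = nu_eq l (\<eta> * m); P4 = nu_less l (\<eta> * m) in
         (P1 \<or> P2 \<or> P3 \<or> P4) \<and>
         \<not> (P1 \<and> P2) \<and> \<not> (P1 \<and> P3) \<and> \<not> (P1 \<and> P4) \<and>
         \<not> (P2 \<and> P3) \<and> \<not> (P2 \<and> P4) \<and> \<not> (P3 \<and> P4) \<and>
         (P1 \<longrightarrow> Q = l^2 * \<alpha>1) \<and>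
         (P2 \<longrightarrow> Q = ee * l^2 * \<alpha>1 \<and> Q = ee * l * m * \<alpha>) \<and>
         (P3 \<longrightarrow> Q = ee * m^2 * \<alpha>2 \<and> Q = ee * l * m * \<alpha>) \<and>
         (P4 \<longrightarrow> Q = m^2 * \<alpha>2)))
   \<and>
     (nu_le (\<alpha>^2) (\<alpha>1 * \<alpha>2) \<longrightarrow>
        (nu_less (m^2 * \<alpha>2) (l^2 * \<alpha>1) \<longrightarrow> Q = l^2 * \<alpha>1) \<and>
        (nu_eq (l^2 * \<alpha>1) (m^2 * \<alpha>2) \<longrightarrow>
            Q = ee * l^2 * \<alpha>1 \<and> Q = ee * m^2 * \<alpha>2 \<and> nu_square (\<alpha>1 * \<alpha>2)) \<and>
        (nu_less (l^2 * \<alpha>1) (m^2 * \<alpha>2) \<longrightarrow> Q = m^2 * \<alpha>2)))"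
proof -
  have S: "supertropical TYPE('a)" by (rule S[OF R])
  note nzR = mult_nz[OF R] nz_pow2[OF R]
  define a1 where "a1 = q x"
  define a2 where "a2 = q y"
  define a where "a = b x y"
  define Q where "Q = q (sm l x + sm m y)"
  have a1nz: "a1 \<noteq> 0" and a2nz: "a2 \<noteq> 0" and anz: "a \<noteq> 0" using nz by (auto simp: a1_def a2_def a_def)
  have zeta2: "nu_eq a (\<zeta> * a1)" using zeta(2) by (simp add: a_def a1_def)
  have eta2: "nu_eq a2 (\<eta> * a)" using eta(2) by (simp add: a_def a2_def)
  have znz: "\<zeta> \<noteq> 0" using tang_nz[OF R zeta(1)] .
  have enz: "\<eta> \<noteq> 0" using tang_nz[OF R eta(1)] .
  have Qexp: "Q = l^2*a1 + m^2*a2 + l*m*a"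
  proof -
    have q1: "\<And>c v. q (sm c v) = c^2 * q v" and q2: "\<And>u v. q (u+v) = q u + q v + b u v"
      and sb: "symmetric_bilinear sm b" using qb unfolding quadratic_pair_def by auto
    have b1: "\<And>u v. b u v = b v u" and b2: "\<And>c u v. b (sm c u) v = c * b u v"
      using sb unfolding symmetric_bilinear_def by auto
    have "b (sm l x) (sm m y) = l * (m * b x y)" using b1 b2 by metis
    then show ?thesis unfolding Q_def a1_def a2_def a_def using q1 q2 by (simp add: mult.assoc)
  qed
  define A where "A = l^2*a1"
  define B where "B = m^2*a2"
  define C where "C = l*m*a"
  have QABC: "Q = A + B + C" using Qexp by (simp add: A_def B_def C_def)
  have partI: "(nu_less (\<zeta> * m) l \<longrightarrow> Q = l^2 * a1) \<and>
        (nu_eq l (\<zeta> * m) \<longrightarrow> Q = ee * l^2 * a1 \<and> Q = ee * l * m * a) \<and>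
        (nu_less (\<eta> * m) l \<and> nu_less l (\<zeta> * m) \<longrightarrow> Q = l * m * a) \<and>
        (nu_eq l (\<eta> * m) \<longrightarrow> Q = ee * m^2 * a2 \<and> Q = ee * l * m * a) \<and>
        (nu_less l (\<eta> * m) \<longrightarrow> Q = m^2 * a2)"
    if gt: "nu_less (a1 * a2) (a^2)"
  proof -
    have c1: "nu_eq (a1*a2) ((a1*a)*\<eta>)" using nu_eq_mult[OF eta2, of a1] by (simp add: mult_ac)
    have c2: "nu_eq (a^2) ((a1*a)*\<zeta>)" using nu_eq_mult[OF zeta2, of a] by (simp add: mult_ac power2_eq_square)
    have "nu_less ((a1*a)*\<eta>) ((a1*a)*\<zeta>)" using gt cmp3(1)[OF c1 c2] by simp
    then have ez: "nu_less \<eta> \<zeta>" using nu_less_cancel[OF R] nzR a1nz anz by blast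
    show ?thesis
    proof (cases "m = 0")
      case True
      then have Qv: "Q = l^2*a1" using Qexp by simp
      have lnz: "l \<noteq> 0" using lm True by simp
      have "\<not> nu_eq l 0" using nu_eq_zero[OF R] lnz by blast
      moreover have "\<not> nu_less l 0" using nu_le_zero[OF R] lnz nu_less_imp_le by blast
      ultimately show ?thesis using True Qv by simp
    next
      case mnz: False
      have em: "nu_less (\<eta>*m) (\<zeta>*m)" using nu_less_mult[OF R mnz ez] by (simp add: mult.commute)
      show ?thesis
      proof (cases "l = 0")
        case True
        then have Qv: "Q = m^2*a2" using Qexp by simp
        have zm: "\<zeta>*m \<noteq> 0" "\<eta>*m \<noteq> 0" using nzR znz enz mnz by auto
        have "\<not> nu_eq 0 (\<zeta>*m)" "\<not> nu_eq 0 (\<eta>*m)" using nu_eq_zero[OF R] zm nu_eq_sym by blast+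
        moreover have "\<not> nu_less (\<zeta>*m) 0" "\<not> nu_less (\<eta>*m) 0"
          using nu_le_zero[OF R] zm nu_less_imp_le by blast+
        ultimately show ?thesis using True Qv by simp
      next
        case lnz: False
        have k1: "l*a1 \<noteq> 0" using nzR lnz a1nz by auto
        have k2: "m*a \<noteq> 0" using nzR mnz anz by auto
        have CA1: "nu_eq C ((l*a1)*(\<zeta>*m))" using nu_eq_mult[OF zeta2, of "l*m"]
          by (simp add: C_def mult_ac)
        have CA2: "nu_eq A ((l*a1)*l)" unfolding A_def nu_eq_def by (simp add: power2_eq_square mult_ac)
        have BC1: "nu_eq B ((m*a)*(\<eta>*m))" using nu_eq_mult[OF eta2, of "m^2"]
          by (simp add: B_def mult_ac power2_eq_square)
        have BC2: "nu_eq C ((m*a)*l)" unfolding C_def nu_eq_def by (simp add: mult_ac)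
        have CA_less: "nu_less C A = nu_less (\<zeta>*m) l"
          using cmp3(1)[OF CA1 CA2] nu_less_mult_iff[OF R k1] by simp
        have AC_less: "nu_less A C = nu_less l (\<zeta>*m)"
          using cmp3(1)[OF CA2 CA1] nu_less_mult_iff[OF R k1] by simp
        have CA_eq: "nu_eq A C = nu_eq l (\<zeta>*m)"
          using cmp3(2)[OF CA2 CA1] nu_eq_mult_iff[OF R k1] by simp
        have BC_less: "nu_less B C = nu_less (\<eta>*m) l"
          using cmp3(1)[OF BC1 BC2] nu_less_mult_iff[OF R k2] by simp
        have CB_less: "nu_less C B = nu_less l (\<eta>*m)"
          using cmp3(1)[OF BC2 BC1] nu_less_mult_iff[OF R k2] by simp
        have BC_eq: "nu_eq B C = nu_eq l (\<eta>*m)"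
          using cmp3(2)[OF BC1 BC2] nu_eq_mult_iff[OF R k2] nu_eq_sym by blast
        have eA: "ee * l^2 * a1 = ee*A" and eB: "ee * m^2 * a2 = ee*B" and eC: "ee*l*m*a = ee*C"
          by (simp_all add: A_def B_def C_def mult.assoc)
        have r1: "Q = A" if h: "nu_less (\<zeta> * m) l"
        proof -
          have "nu_less C A" using h CA_less by simp
          moreover have "nu_less B C" using BC_less nu_less_trans[OF em h] by simp
          ultimately have "nu_less B A" using nu_less_trans by blast
          then have "B + C + A = A" using sum_max[OF S, of B A C] \<open>nu_less C A\<close> by blast
          moreover have "Q = B + C + A" using QABC by (simp add: ac_simps)
          ultimately show ?thesis by simp
        qed
        have r2: "Q = ee*A \<and> Q = ee*C" if h: "nu_eq l (\<zeta> * m)"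
        proof -
          have ac: "nu_eq A C" using h CA_eq by simp
          have "nu_less (\<eta>*m) l" using em h nu_less_cong nu_eq_sym nu_eq_imp_le[OF S]
            by (metis nu_less_le_trans)
          then have bc: "nu_less B C" using BC_less by simp
          have "Q = ee*C" using QABC sum_tie[OF S ac nu_less_imp_le[OF bc]] by simp
          moreover have "ee*C = ee*A" using ac unfolding nu_eq_def by simp
          ultimately show ?thesis by simp
        qed
        have r3: "Q = C" if h: "nu_less (\<eta> * m) l" "nu_less l (\<zeta> * m)"
        proof -
          have "nu_less A C" "nu_less B C" using h AC_less BC_less by simp_all
          then show ?thesis using QABC sum_max[OF S] by simp
        qed
        have r4: "Q = ee*B \<and> Q = ee*C" if h: "nu_eq l (\<eta> * m)"
        proof -
          have bc: "nu_eq B C" using h BC_eq by simp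
          have "nu_less l (\<zeta>*m)" using em h nu_eq_imp_le[OF S] by (metis nu_le_less_trans)
          then have "nu_less A C" using AC_less by simp
          have "Q = ee*C" using QABC sum_tie[OF S bc nu_less_imp_le[OF \<open>nu_less A C\<close>]]
            by (simp add: ac_simps)
          moreover have "ee*C = ee*B" using bc unfolding nu_eq_def by simp
          ultimately show ?thesis by simp
        qed
        have r5: "Q = B" if h: "nu_less l (\<eta> * m)"
        proof -
          have "nu_less C B" using h CB_less by simp
          moreover have "nu_less A C" using AC_less nu_less_trans[OF h em] by simp
          ultimately have "nu_less A B" using nu_less_trans by blast
          then have "A + C + B = B" using sum_max[OF S, of A B C] \<open>nu_less C B\<close> by blast
          moreover have "Q = A + C + B" using QABC by (simp add: ac_simps)
          ultimately show ?thesis by simp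
        qed
        show ?thesis unfolding eA eB eC using r1 r2 r3 r4 r5 unfolding A_def B_def C_def by blast
      qed
    qed
  qed
  have H1: "nu_less (a1 * a2) (a^2) \<and> \<not> (discrete TYPE('a) \<and> (\<exists>\<pi>. uniformizer \<pi> \<and> nu_eq (a^2) (tinv \<pi> * a1 * a2))) \<longrightarrow>
        (nu_less (\<zeta> * m) l \<longrightarrow> Q = l^2 * a1) \<and>
        (nu_eq l (\<zeta> * m) \<longrightarrow> Q = ee * l^2 * a1 \<and> Q = ee * l * m * a) \<and>
        (nu_less (\<eta> * m) l \<and> nu_less l (\<zeta> * m) \<longrightarrow> Q = l * m * a) \<and>
        (nu_eq l (\<eta> * m) \<longrightarrow> Q = ee * m^2 * a2 \<and> Q = ee * l * m * a) \<and>
        (nu_less l (\<eta> * m) \<longrightarrow> Q = m^2 * a2)" using partI by blast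
  have H2: "(nu_less (\<zeta> * m) l \<or> nu_eq l (\<zeta> * m) \<or> nu_eq l (\<eta> * m) \<or> nu_less l (\<eta> * m)) \<and>
         \<not> (nu_less (\<zeta> * m) l \<and> nu_eq l (\<zeta> * m)) \<and> \<not> (nu_less (\<zeta> * m) l \<and> nu_eq l (\<eta> * m)) \<and>
         \<not> (nu_less (\<zeta> * m) l \<and> nu_less l (\<eta> * m)) \<and>
         \<not> (nu_eq l (\<zeta> * m) \<and> nu_eq l (\<eta> * m)) \<and> \<not> (nu_eq l (\<zeta> * m) \<and> nu_less l (\<eta> * m)) \<and>
         \<not> (nu_eq l (\<eta> * m) \<and> nu_less l (\<eta> * m)) \<and>
         (nu_less (\<zeta> * m) l \<longrightarrow> Q = l^2 * a1) \<and>
         (nu_eq l (\<zeta> * m) \<longrightarrow> Q = ee * l^2 * a1 \<and> Q = ee * l * m * a) \<and>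
         (nu_eq l (\<eta> * m) \<longrightarrow> Q = ee * m^2 * a2 \<and> Q = ee * l * m * a) \<and>
         (nu_less l (\<eta> * m) \<longrightarrow> Q = m^2 * a2)"
    if disc: "discrete TYPE('a) \<and> (\<exists>\<pi>. uniformizer \<pi> \<and> nu_eq (a^2) (tinv \<pi> * a1 * a2))"
  proof -
    from disc obtain \<pi> where pu: "uniformizer \<pi>" and pe: "nu_eq (a^2) (tinv \<pi> * a1 * a2)" by blast
    define t where "t = tinv \<pi>"
    have sm: "smallest_above_e (ee*t)" using pu unfolding uniformizer_def t_def by simp
    then have c0: "ee*t \<in> ghosts" "ee + ee*t = ee*t" "ee*t \<noteq> ee"
      "\<And>c. c \<in> ghosts \<Longrightarrow> ee + c = c \<Longrightarrow> c \<noteq> ee \<Longrightarrow> ee*t + c = ee*t + c \<and> (ee*t) + c = c"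
      unfolding smallest_above_e_def by auto
    have tnz: "t \<noteq> 0" using c0(1) unfolding ghosts_def by auto
    have one_t: "nu_less 1 t" unfolding nu_less_def nu_le_def using c0(2,3) by simp
    have k0: "a1*a2 \<noteq> 0" using nzR a1nz a2nz by auto
    have "nu_less ((a1*a2)*1) ((a1*a2)*t)" using nu_less_mult[OF R k0 one_t] .
    moreover have "nu_eq ((a1*a2)*t) (a^2)" using pe nu_eq_sym unfolding t_def by (simp add: mult_ac)
    ultimately have gt: "nu_less (a1*a2) (a^2)" using nu_less_cong[of "a1*a2" "a1*a2"] unfolding nu_eq_def
      by (metis mult_1_right nu_less_cong nu_eq_def)
    have c2: "nu_eq (a^2) ((a1*a)*\<zeta>)" using nu_eq_mult[OF zeta2, of a] by (simp add: mult_ac power2_eq_square)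
    have c3: "nu_eq (t*a1*a2) ((a1*a)*(t*\<eta>))" using nu_eq_mult[OF eta2, of "t*a1"] by (simp add: mult_ac)
    have "nu_eq ((a1*a)*\<zeta>) ((a1*a)*(t*\<eta>))" using c2 c3 pe unfolding t_def nu_eq_def by simp
    then have zt: "nu_eq \<zeta> (t*\<eta>)" using nu_eq_cancel[OF R] nzR a1nz anz by blast
    have "nu_less (\<eta>*1) (\<eta>*t)" using nu_less_mult[OF R enz one_t] .
    then have ez: "nu_less \<eta> \<zeta>" using zt unfolding nu_less_def nu_le_def nu_eq_def by (simp add: mult.commute)
    note I = partI[OF gt]
    show ?thesis
    proof (cases "m = 0")
      case True
      have lnz: "l \<noteq> 0" using lm True by simp
      have "\<not> nu_eq l 0" using nu_eq_zero[OF R] lnz by blast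
      moreover have "\<not> nu_less l 0" using nu_le_zero[OF R] lnz nu_less_imp_le by blast
      moreover have "nu_less 0 l" using nu_less_zero[OF R lnz] .
      ultimately show ?thesis using True I by simp
    next
      case mnz: False
      have em: "nu_less (\<eta>*m) (\<zeta>*m)" using nu_less_mult[OF R mnz ez] by (simp add: mult.commute)
      have gap: False if h1: "nu_less (\<eta>*m) l" and h2: "nu_less l (\<zeta>*m)"
      proof -
        define g where "g = \<eta>*m"
        have gnz: "g \<noteq> 0" using nzR enz mnz by (auto simp: g_def)
        obtain s where s: "ee*(s*g) = ee" using nz_inv[OF R gnz] by blast
        have snz: "s \<noteq> 0" using s ee_nz[OF R] by auto
        have "nu_eq (\<zeta>*m) (t*g)" using nu_eq_mult[OF zt, of m] by (simp add: g_def mult_ac)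
        then have h2': "nu_less l (t*g)" using h2 unfolding nu_less_def nu_le_def nu_eq_def by simp
        define c where "c = ee*(s*l)"
        have A1: "nu_less (s*g) (s*l)" using nu_less_mult[OF R snz] h1 by (simp add: g_def)
        have A2: "nu_less (s*l) (s*(t*g))" using nu_less_mult[OF R snz h2'] .
        have et: "ee*(s*(t*g)) = ee*t"
        proof -
          have "ee*(s*(t*g)) = t*(ee*(s*g))" by (simp add: mult_ac)
          then show ?thesis using s by (simp add: mult.commute)
        qed
        have d1: "ee + c = c" "c \<noteq> ee" using A1 s unfolding nu_less_def nu_le_def c_def by auto
        have d2: "c + ee*t = ee*t" "c \<noteq> ee*t" using A2 et unfolding nu_less_def nu_le_def c_def by auto
        have "c \<noteq> 0" using d1 ee_nz[OF R] by auto
        then have "c \<in> ghosts" unfolding ghosts_def c_def by auto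
        then have "ee*t + c = c" using c0(4) d1 by blast
        then show False using d2 by (simp add: add.commute)
      qed
      have tot1: "nu_less (\<zeta>*m) l \<or> nu_eq l (\<zeta>*m) \<or> nu_less l (\<zeta>*m)"
        using nu_total[OF S, of l "\<zeta>*m"] unfolding nu_less_def nu_eq_def by auto
      have tot2: "nu_less (\<eta>*m) l \<or> nu_eq l (\<eta>*m) \<or> nu_less l (\<eta>*m)"
        using nu_total[OF S, of l "\<eta>*m"] unfolding nu_less_def nu_eq_def by auto
      have ex: "nu_less (\<zeta> * m) l \<or> nu_eq l (\<zeta> * m) \<or> nu_eq l (\<eta> * m) \<or> nu_less l (\<eta> * m)"
        using tot1 tot2 gap by blast
      have x1: "\<not> (nu_less (\<zeta> * m) l \<and> nu_eq l (\<zeta> * m))"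
        unfolding nu_less_def nu_eq_def by auto
      have x2: "\<not> (nu_less (\<zeta> * m) l \<and> nu_eq l (\<eta> * m))"
        using em nu_less_asym unfolding nu_less_def nu_le_def nu_eq_def by metis
      have x3: "\<not> (nu_less (\<zeta> * m) l \<and> nu_less l (\<eta> * m))"
        using em nu_less_asym nu_less_trans by metis
      have x4: "\<not> (nu_eq l (\<zeta> * m) \<and> nu_eq l (\<eta> * m))"
        using em unfolding nu_less_def nu_eq_def by auto
      have x5: "\<not> (nu_eq l (\<zeta> * m) \<and> nu_less l (\<eta> * m))"
        using em nu_less_asym unfolding nu_less_def nu_le_def nu_eq_def by metis
      have x6: "\<not> (nu_eq l (\<eta> * m) \<and> nu_less l (\<eta> * m))"
        unfolding nu_less_def nu_eq_def by auto
      show ?thesis using ex x1 x2 x3 x4 x5 x6 I by blast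
    qed
  qed
  have H3: "(nu_less (m^2 * a2) (l^2 * a1) \<longrightarrow> Q = l^2 * a1) \<and>
        (nu_eq (l^2 * a1) (m^2 * a2) \<longrightarrow>
            Q = ee * l^2 * a1 \<and> Q = ee * m^2 * a2 \<and> nu_square (a1 * a2)) \<and>
        (nu_less (l^2 * a1) (m^2 * a2) \<longrightarrow> Q = m^2 * a2)"
    if le: "nu_le (a^2) (a1 * a2)"
  proof (cases "l = 0 \<or> m = 0")
    case True
    show ?thesis
    proof (cases "l = 0")
      case l0: True
      then have mnz: "m \<noteq> 0" using lm by simp
      have Bnz: "m^2*a2 \<noteq> 0" using nzR mnz a2nz by auto
      have "\<not> nu_less (m^2*a2) 0" "\<not> nu_eq 0 (m^2*a2)"
        using nu_le_zero[OF R] nu_eq_zero[OF R] nu_eq_sym nu_less_imp_le Bnz by blast+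
      then show ?thesis using l0 Qexp by simp
    next
      case False
      then have m0: "m = 0" and lnz: "l \<noteq> 0" using True by auto
      have Anz: "l^2*a1 \<noteq> 0" using nzR lnz a1nz by auto
      have "\<not> nu_less (l^2*a1) 0" "\<not> nu_eq (l^2*a1) 0"
        using nu_le_zero[OF R] nu_eq_zero[OF R] nu_less_imp_le Anz by blast+
      then show ?thesis using m0 Qexp by simp
    qed
  next
    case False
    then have lnz: "l \<noteq> 0" and mnz: "m \<noteq> 0" by auto
    have Anz: "A \<noteq> 0" and Bnz: "B \<noteq> 0" and Cnz: "C \<noteq> 0"
      using nzR lnz mnz a1nz a2nz anz by (auto simp: A_def B_def C_def)
    have CC: "C*C = (l*m)^2*a^2" and AB: "A*B = (l*m)^2*(a1*a2)"
      by (simp_all add: A_def B_def C_def power2_eq_square mult_ac)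
    have key: "nu_le (C*C) (A*B)" unfolding CC AB by (rule nu_le_mult[OF le])
    have r1: "Q = A" if h: "nu_less B A"
    proof -
      have "nu_less C A"
      proof (rule ccontr)
        assume "\<not> nu_less C A"
        then have ac: "nu_le A C" using nu_not_less[OF S] by blast
        have "nu_less (A*B) (A*A)" using nu_less_mult[OF R Anz h] .
        moreover have "nu_le (A*A) (A*C)" using nu_le_mult[OF ac] .
        moreover have "nu_le (A*C) (C*C)" using nu_le_mult[OF ac, of C] by (simp add: mult.commute)
        ultimately have "nu_less (A*B) (C*C)" using nu_less_le_trans by blast
        then show False using key nu_not_less[OF S] by blast
      qed
      then have "B + C + A = A" using sum_max[OF S] h by blast
      then show ?thesis using QABC by (simp add: ac_simps)
    qed
    have r3: "Q = B" if h: "nu_less A B"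
    proof -
      have "nu_less C B"
      proof (rule ccontr)
        assume "\<not> nu_less C B"
        then have bc: "nu_le B C" using nu_not_less[OF S] by blast
        have "nu_less (B*A) (B*B)" using nu_less_mult[OF R Bnz h] .
        moreover have "nu_le (B*B) (B*C)" using nu_le_mult[OF bc] .
        moreover have "nu_le (B*C) (C*C)" using nu_le_mult[OF bc, of C] by (simp add: mult.commute)
        ultimately have "nu_less (A*B) (C*C)" using nu_less_le_trans by (metis mult.commute)
        then show False using key nu_not_less[OF S] by blast
      qed
      then have "A + C + B = B" using sum_max[OF S] h by blast
      then show ?thesis using QABC by (simp add: ac_simps)
    qed
    have r2: "Q = ee*A \<and> Q = ee*B \<and> nu_square (a1*a2)" if h: "nu_eq A B"
    proof -
      have "nu_le C A"
      proof (rule ccontr)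
        assume "\<not> nu_le C A"
        then have ac: "nu_less A C" using nu_not_less[OF S] by blast
        have "nu_eq (A*B) (A*A)" using nu_eq_mult[OF nu_eq_sym[OF h]] .
        moreover have "nu_less (A*A) (A*C)" using nu_less_mult[OF R Anz ac] .
        moreover have "nu_less (A*C) (C*C)" using nu_less_mult[OF R Cnz ac] by (simp add: mult.commute)
        ultimately have "nu_less (A*B) (C*C)" using nu_less_trans unfolding nu_less_def nu_le_def nu_eq_def
          by (metis (no_types, lifting))
        then show False using key nu_not_less[OF S] by blast
      qed
      then have "nu_le C B" using h unfolding nu_le_def nu_eq_def by simp
      then have "A + C + B = ee*B" using sum_tie[OF S h] by blast
      then have q: "Q = ee*B" using QABC by (simp add: ac_simps)
      moreover have "ee*A = ee*B" using h unfolding nu_eq_def .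
      moreover have "nu_square (a1*a2)"
      proof -
        obtain s where s: "ee*(s*m) = ee" using nz_inv[OF R mnz] by blast
        define d where "d = l*a1*s"
        have e1: "ee*(l^2*a1) = ee*(m^2*a2)" using h unfolding nu_eq_def A_def B_def .
        have "ee*(d^2) = (ee*(l^2*a1))*(a1*s^2)" by (simp add: d_def power2_eq_square mult_ac)
        also have "\<dots> = (ee*(m^2*a2))*(a1*s^2)" using e1 by simp
        also have "\<dots> = (ee*ee)*(m^2*a2)*(a1*s^2)" using ee_idem[OF S] by simp
        also have "\<dots> = (ee*(s*m))*(ee*(s*m))*(a1*a2)" by (simp add: power2_eq_square mult_ac)
        also have "\<dots> = ee*(a1*a2)" using s ee_idem[OF S] by simp
        finally have "nu_eq (a1*a2) (d^2)" unfolding nu_eq_def by simp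
        then show ?thesis unfolding nu_square_def by blast
      qed
      ultimately show ?thesis by simp
    qed
    have eA: "ee * l^2 * a1 = ee*A" and eB: "ee * m^2 * a2 = ee*B"
      by (simp_all add: A_def B_def mult.assoc)
    show ?thesis unfolding eA eB using r1 r2 r3 unfolding A_def B_def by blast
  qed
  show ?thesis
    unfolding Let_def a1_def[symmetric] a2_def[symmetric] a_def[symmetric] Q_def[symmetric]
    using H1 H2 H3 by blast
qed
end
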